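(* In the fixed-base chain setting of the context, let $\delta\boldsymbol{\pi}\in\mathbb{R}^{10N}$ and let $i\ge 2$ be such that $\delta\mathbf{I}_j=\mathbf{0}$ for all $j>i$, where $\delta\mathbf I_j=[\delta\boldsymbol\pi_j]^\wedge$. Define $\delta\mathbf{I}_{i-1}'=\delta\mathbf{I}_{i-1}+({}^{J_i}\mathbf{X}_{i-1})^\top\delta\mathbf{I}_i\,{}^{J_i}\mathbf{X}_{i-1}$ and $\Delta{}^{J_i}\mathbf{I}_i(q_i)={}^{i}\mathbf{X}_{J_i}(q_i)^\top\delta\mathbf{I}_i\,{}^{i}\mathbf{X}_{J_i}(q_i)-\delta\mathbf{I}_i$, and write ${}^{J_i}\mathbf{v}_{i-1}={}^{J_i}\mathbf{X}_{i-1}\mathbf{v}_{i-1}$. Then $\sum_{j=1}^{N}\mathbf{v}_j^\top\delta\mathbf{I}_j\mathbf{v}_j=0$ for all $\mathbf{q},\dot{\mathbf{q}}\in\mathbb R^N$ if and only if all three of the following hold for all $\mathbf{q},\dot{\mathbf{q}}$: (a) $\boldsymbol{\Phi}_i^\top\delta\mathbf{I}_i\mathbf{v}_i=0$; (b) ${}^{J_i}\mathbf{v}_{i-1}^\top\,\Delta{}^{J_i}\mathbf{I}_i(q_i)\,{}^{J_i}\mathbf{v}_{i-1}=0$; (c) $\sum_{j=1}^{i-2}\mathbf{v}_j^\top\delta\mathbf{I}_j\mathbf{v}_j+\mathbf{v}_{i-1}^\top\delta\mathbf{I}_{i-1}'\mathbf{v}_{i-1}=0$.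
   Context: Spatial notation. For $\mathbf{x}\in\mathbb{R}^3$, $\mathbf{S}(\mathbf{x})$ is the skew-symmetric matrix with $\mathbf{S}(\mathbf{x})\mathbf{y}=\mathbf{x}\times\mathbf{y}$. For $\mathbf{v}=[\boldsymbol{\omega};\mathbf{u}]\in\mathbb{R}^6$, $(\mathbf{v}\times)=\begin{bmatrix}\mathbf{S}(\boldsymbol{\omega})&\mathbf{0}\\ \mathbf{S}(\mathbf{u})&\mathbf{S}(\boldsymbol{\omega})\end{bmatrix}$. A spatial transform is a matrix $\begin{bmatrix}\mathbf{R}&\mathbf{0}\\-\mathbf{R}\mathbf{S}(\mathbf{p})&\mathbf{R}\end{bmatrix}$ with $\mathbf{R}\in SO(3)$, $\mathbf{p}\in\mathbb{R}^3$. Inertial parameters $\boldsymbol{\pi}=[m,h_x,h_y,h_z,I_{xx},I_{xy},I_{xz},I_{yy},I_{yz},I_{zz}]^\top\in\mathbb{R}^{10}$; $[\boldsymbol{\pi}]^{\wedge}=\begin{bmatrix}\bar{\mathbf{I}}&\mathbf{S}(\mathbf{h})\\ \mathbf{S}(\mathbf{h})^{\top}&m\mathbf{1}_3\end{bmatrix}$ with $\mathbf{h}=[h_x,h_y,h_z]^\top$ and $\bar{\mathbf{I}}$ the symmetric $3\times3$ matrix with entries $I_{xx},I_{xy},\ldots$. Fixed-base chain. Body $0$ is the fixed ground with $\mathbf{v}_0=\mathbf{0}$. For $i=1,\ldots,N$, joint $i$ has coordinate $q_i\in\mathbb R$ and $\mathbf{v}_i={}^{i}\mathbf{X}_{i-1}(q_i)\mathbf{v}_{i-1}+\boldsymbol{\Phi}_i\dot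 q_i$, with $\boldsymbol{\Phi}_i\in\mathbb{R}^6$ fixed, ${}^{i}\mathbf{X}_{i-1}(q_i)={}^{i}\mathbf{X}_{J_i}(q_i)\,{}^{J_i}\mathbf{X}_{i-1}$, ${}^{J_i}\mathbf{X}_{i-1}$ a constant spatial transform, and ${}^{i}\mathbf{X}_{J_i}(q_i)$ a spatial transform with ${}^{i}\mathbf{X}_{J_i}(0)=\mathbf{1}_6$ and $\frac{d}{dq_i}{}^{i}\mathbf{X}_{J_i}(q_i)=-(\boldsymbol{\Phi}_i\times){}^{i}\mathbf{X}_{J_i}(q_i)$. $\mathbf q=(q_1,\dots,q_N)$ and $\delta\boldsymbol{\pi}=[\delta\boldsymbol{\pi}_1^\top,\ldots,\delta\boldsymbol{\pi}_N^\top]^\top$. *)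

theory Defs
  imports "HOL-Analysis.Analysis"
begin

text \<open>Spatial (6D) vectors are real^6: components 1,2,3 are the angular part omega,
components 4,5,6 the linear part u.  Inertial parameters are real^10 with
components 1..10 = m, hx, hy, hz, Ixx, Ixy, Ixz, Iyy, Iyz, Izz (component 10 = index 0).\<close>

definition top3 :: "real^6 \<Rightarrow> real^3" where
  "top3 v = vector [v$1, v$2, v$3]"

definition bot3 :: "real^6 \<Rightarrow> real^3" where
  "bot3 v = vector [v$4, v$5, v$6]"

definition stack6 :: "real^3 \<Rightarrow> real^3 \<Rightarrow> real^6" where
  "stack6 x y = vector [x$1, x$2, x$3, y$1, y$2, y$3]"

definition blockmat :: "real^3^3 \<Rightarrow> real^3^3 \<Rightarrow> real^3^3 \<Rightarrow> real^3^3 \<Rightarrow> real^6^6" where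
  "blockmat A B C D =
     matrix (\<lambda>v. stack6 (A *v top3 v + B *v bot3 v) (C *v top3 v + D *v bot3 v))"

definition skew :: "real^3 \<Rightarrow> real^3^3" where
  "skew x = matrix (\<lambda>y. cross3 x y)"

definition scross :: "real^6 \<Rightarrow> real^6^6" where
  "scross v = blockmat (skew (top3 v)) 0 (skew (bot3 v)) (skew (top3 v))"

definition spatial_transform :: "real^6^6 \<Rightarrow> bool" where
  "spatial_transform X \<longleftrightarrow>
     (\<exists>R p. rotation_matrix R \<and> X = blockmat R 0 (- (R ** skew p)) R)"

definition inertia_hat :: "real^10 \<Rightarrow> real^6^6" where
  "inertia_hat \<pi> =
     (let m = \<pi>$1; h = vector [\<pi>$2, \<pi>$3, \<pi>$4] :: real^3;
          Ibar = vector [vector [\<pi>$5, \<pi>$6, \<pi>$7],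
                         vector [\<pi>$6, \<pi>$8, \<pi>$9],
                         vector [\<pi>$7, \<pi>$9, \<pi>$10]] :: real^3^3
      in blockmat Ibar (skew h) (transpose (skew h)) (m *\<^sub>R mat 1))"

text \<open>Fixed-base chain: XJ i q = iX_{J_i}(q), XT i = J_iX_{i-1}, Phi i = motion subspace.\<close>
definition fixed_base_chain ::
  "nat \<Rightarrow> (nat \<Rightarrow> real^6) \<Rightarrow> (nat \<Rightarrow> real \<Rightarrow> real^6^6) \<Rightarrow> (nat \<Rightarrow> real^6^6) \<Rightarrow> bool" where
  "fixed_base_chain N Phi XJ XT \<longleftrightarrow>
     (\<forall>i\<in>{1..N}. spatial_transform (XT i)
        \<and> (\<forall>q. spatial_transform (XJ i q))
        \<and> XJ i 0 = mat 1
        \<and> (\<forall>q. (XJ i has_vector_derivative (- (scross (Phi i) ** XJ i q))) (at q)))"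

fun vel :: "(nat \<Rightarrow> real^6) \<Rightarrow> (nat \<Rightarrow> real \<Rightarrow> real^6^6) \<Rightarrow> (nat \<Rightarrow> real^6^6)
            \<Rightarrow> (nat \<Rightarrow> real) \<Rightarrow> (nat \<Rightarrow> real) \<Rightarrow> nat \<Rightarrow> real^6" where
  "vel Phi XJ XT q qd 0 = 0"
| "vel Phi XJ XT q qd (Suc i) =
     (XJ (Suc i) (q (Suc i)) ** XT (Suc i)) *v vel Phi XJ XT q qd i + qd (Suc i) *\<^sub>R Phi (Suc i)"

end

theory Submission
  imports Defs
begin
lemma exhaust_6:
  fixes x :: 6
  shows "x = 1 \<or> x = 2 \<or> x = 3 \<or> x = 4 \<or> x = 5 \<or> x = 6"
proof (induct x)
  case (of_int z)
  then have "z = 0 \<or> z = 1 \<or> z = 2 \<or> z = 3 \<or> z = 4 \<or> z = 5" by fastforce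
  then show ?case by auto
qed
lemma forall_6: "(\<forall>i::6. P i) \<longleftrightarrow> P 1 \<and> P 2 \<and> P 3 \<and> P 4 \<and> P 5 \<and> P 6"
  by (metis exhaust_6)
lemma v6: "(vector [a,b,c,d,e,f] :: real^6) $ 1 = a"  "(vector [a,b,c,d,e,f] :: real^6) $ 2 = b"
  "(vector [a,b,c,d,e,f] :: real^6) $ 3 = c" "(vector [a,b,c,d,e,f] :: real^6) $ 4 = d"
  "(vector [a,b,c,d,e,f] :: real^6) $ 5 = e" "(vector [a,b,c,d,e,f] :: real^6) $ 6 = f"
  by (simp_all add: vector_def)
lemma inertia_sym: "transpose (inertia_hat p) = inertia_hat p"
  unfolding inertia_hat_def Let_def blockmat_def
  by (simp add: vec_eq_iff transpose_def matrix_def forall_6 forall_3 stack6_def top3_def bot3_def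
     skew_def cross3_def axis_def  matrix_vector_mult_def sum_3 mat_def v6)
lemma sym_dot: "transpose D = (D::real^'n^'n) \<Longrightarrow> x \<bullet> (D *v y) = y \<bullet> (D *v x)"
  by (metis dot_lmul_matrix inner_commute transpose_transpose vector_transpose_matrix)
lemma quad: "(X *v w) \<bullet> (D *v (X *v w)) = (w::real^'n) \<bullet> ((transpose X ** D ** X) *v w)"
  by (metis dot_lmul_matrix inner_commute matrix_vector_mul_assoc vector_transpose_matrix)
lemma vel_local: "(\<forall>k\<le>j. q k = q' k \<and> qd k = qd' k) \<Longrightarrow> vel Phi XJ XT q qd j = vel Phi XJ XT q' qd' j"
  by (induction j) auto

theorem mainTheorem7:
  fixes N i :: nat
    and Phi :: "nat \<Rightarrow> real^6"
    and XJ :: "nat \<Rightarrow> real \<Rightarrow> real^6^6"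
    and XT :: "nat \<Rightarrow> real^6^6"
    and dpi :: "nat \<Rightarrow> real^10"
  assumes chain: "fixed_base_chain N Phi XJ XT"
    and i_ge: "2 \<le> i" and i_le: "i \<le> N"
    and zero_after: "\<forall>j. i < j \<and> j \<le> N \<longrightarrow> inertia_hat (dpi j) = 0"
  shows "(\<forall>q qd. (\<Sum>j=1..N. vel Phi XJ XT q qd j \<bullet> (inertia_hat (dpi j) *v vel Phi XJ XT q qd j)) = 0)
    \<longleftrightarrow>
     (\<forall>q qd. Phi i \<bullet> (inertia_hat (dpi i) *v vel Phi XJ XT q qd i) = 0)
   \<and> (\<forall>q qd. (XT i *v vel Phi XJ XT q qd (i - 1)) \<bullet>
          ((transpose (XJ i (q i)) ** inertia_hat (dpi i) ** XJ i (q i) - inertia_hat (dpi i))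
             *v (XT i *v vel Phi XJ XT q qd (i - 1))) = 0)
   \<and> (\<forall>q qd. (\<Sum>j=1..i-2. vel Phi XJ XT q qd j \<bullet> (inertia_hat (dpi j) *v vel Phi XJ XT q qd j))
          + vel Phi XJ XT q qd (i - 1) \<bullet>
              ((inertia_hat (dpi (i - 1)) + transpose (XT i) ** inertia_hat (dpi i) ** XT i)
                 *v vel Phi XJ XT q qd (i - 1)) = 0)"
proof -
  obtain k where ik: "i = Suc (Suc k)" using i_ge by (metis add_2_eq_Suc le_Suc_ex)
  define T where "T = (\<lambda>q qd j. vel Phi XJ XT q qd j \<bullet> (inertia_hat (dpi j) *v vel Phi XJ XT q qd j))"
  define D where "D = inertia_hat (dpi i)"
  define P where "P q qd = (\<Sum>j=1..i-2. T q qd j) + T q qd (i-1)" for q qd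
  define W where "W q qd = XT i *v vel Phi XJ XT q qd (i-1)" for q qd
  define Q where "Q q qd = W q qd \<bullet> ((transpose (XJ i (q i)) ** D ** XJ i (q i)) *v W q qd)" for q qd
  define B where "B q qd = Phi i \<bullet> (D *v (XJ i (q i) *v W q qd))" for q qd
  define G where "G = Phi i \<bullet> (D *v Phi i)"
  have Dsym: "transpose D = D" unfolding D_def by (rule inertia_sym)
  have XJ0: "XJ i 0 = mat 1" using chain i_le ik unfolding fixed_base_chain_def by auto
  have E0: "(\<Sum>j=1..N. T q qd j) = P q qd + T q qd i" for q qd
  proof -
    have "(\<Sum>j=1..N. T q qd j) = (\<Sum>j=1..i. T q qd j) + (\<Sum>j=Suc i..N. T q qd j)"
    proof -
      obtain p where Np: "N = i + p" using i_le le_Suc_ex by blast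
      show ?thesis using sum.ub_add_nat[of 1 i "T q qd" p] Np ik by simp
    qed
    also have "(\<Sum>j=Suc i..N. T q qd j) = 0"
      by (rule sum.neutral) (auto simp: T_def zero_after)
    also have "(\<Sum>j=1..i. T q qd j) = P q qd + T q qd i"
      unfolding P_def ik by (simp add: sum.cl_ivl_Suc)
    finally show ?thesis by simp
  qed
  have velI: "vel Phi XJ XT q qd i = XJ i (q i) *v W q qd + qd i *\<^sub>R Phi i" for q qd
    unfolding W_def ik by (simp add: matrix_vector_mul_assoc)
  have E1: "T q qd i = Q q qd + 2 * qd i * B q qd + (qd i)^2 * G" for q qd
  proof -
    have s: "(XJ i (q i) *v W q qd) \<bullet> (D *v Phi i) = B q qd"
      unfolding B_def using sym_dot[OF Dsym] by metis
    show ?thesis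
      unfolding T_def velI D_def[symmetric] Q_def[symmetric]
      by (simp add: matrix_vector_right_distrib matrix_vector_mult_scaleR inner_add_left inner_add_right
          quad s B_def[symmetric] G_def[symmetric] power2_eq_square algebra_simps Q_def)
  qed
  have E2: "Phi i \<bullet> (inertia_hat (dpi i) *v vel Phi XJ XT q qd i) = B q qd + qd i * G" for q qd
    unfolding velI D_def[symmetric]
    by (simp add: matrix_vector_right_distrib matrix_vector_mult_scaleR inner_add_right B_def G_def)
  have E3: "(XT i *v vel Phi XJ XT q qd (i - 1)) \<bullet>
          ((transpose (XJ i (q i)) ** inertia_hat (dpi i) ** XJ i (q i) - inertia_hat (dpi i))
             *v (XT i *v vel Phi XJ XT q qd (i - 1))) = Q q qd - W q qd \<bullet> (D *v W q qd)" for q qd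
    unfolding W_def[symmetric] D_def[symmetric] Q_def
    by (simp add: matrix_vector_mult_diff_rdistrib inner_diff_right)
  have E4: "(\<Sum>j=1..i-2. vel Phi XJ XT q qd j \<bullet> (inertia_hat (dpi j) *v vel Phi XJ XT q qd j))
          + vel Phi XJ XT q qd (i - 1) \<bullet>
              ((inertia_hat (dpi (i - 1)) + transpose (XT i) ** inertia_hat (dpi i) ** XT i)
                 *v vel Phi XJ XT q qd (i - 1)) = P q qd + W q qd \<bullet> (D *v W q qd)" for q qd
    unfolding P_def W_def D_def T_def
    by (simp add: matrix_vector_mult_add_rdistrib inner_add_right quad)
  have invP: "P (q(i:=t)) (qd(i:=s)) = P q qd" for q qd t s
  proof -
    have "T (q(i:=t)) (qd(i:=s)) j = T q qd j" if "j < i" for j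
    proof -
      have "vel Phi XJ XT (q(i:=t)) (qd(i:=s)) j = vel Phi XJ XT q qd j"
        using that by (intro vel_local) auto
      then show ?thesis unfolding T_def by simp
    qed
    then show ?thesis unfolding P_def using ik by simp
  qed
  have invW: "W (q(i:=t)) (qd(i:=s)) = W q qd" for q qd t s
  proof -
    have "vel Phi XJ XT (q(i:=t)) (qd(i:=s)) (i-1) = vel Phi XJ XT q qd (i-1)"
      using ik by (intro vel_local) auto
    then show ?thesis unfolding W_def by simp
  qed
  have Q0: "Q (q(i:=0)) qd = W (q(i:=0)) qd \<bullet> (D *v W (q(i:=0)) qd)" for q qd
    unfolding Q_def by (simp add: XJ0)
  have invQW: "Q (q(i:=0)) (qd(i:=s)) = W q qd \<bullet> (D *v W q qd)" for q qd s
    using Q0[of q "qd(i:=s)"] invW by simp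
  have invB: "B q (qd(i:=s)) = B q qd" for q qd s
    unfolding B_def using invW[where q=q and qd=qd and t="q i" and s=s] by simp
  have invQ: "Q q (qd(i:=s)) = Q q qd" for q qd s
    unfolding Q_def using invW[where q=q and qd=qd and t="q i" and s=s] by simp
  have core: "(\<forall>q qd. (\<Sum>j=1..N. T q qd j) = 0) \<longleftrightarrow> (\<forall>q qd. B q qd + qd i * G = 0) \<and> (\<forall>q qd. Q q qd - W q qd \<bullet> (D *v W q qd) = 0) \<and>
      (\<forall>q qd. P q qd + W q qd \<bullet> (D *v W q qd) = 0)"
  proof
    assume H: "\<forall>q qd. (\<Sum>j=1..N. T q qd j) = 0"
    have H': "P q qd + Q q qd + 2 * qd i * B q qd + (qd i)^2 * G = 0" for q qd
      using H E0 E1 by (metis add.assoc)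
    have BG: "B q qd = 0 \<and> G = 0" for q qd
    proof -
      have a: "P q qd + Q q qd = 0" using H'[of q "qd(i:=0)"] invP[where q=q and qd=qd and t="q i" and s=0] invQ invB by simp
      have b: "P q qd + Q q qd + 2 * B q qd + G = 0" using H'[of q "qd(i:=1)"] invP[where q=q and qd=qd and t="q i" and s=1] invQ invB by simp
      have c: "P q qd + Q q qd - 2 * B q qd + G = 0" using H'[of q "qd(i:=-1)"] invP[where q=q and qd=qd and t="q i" and s="-1"] invQ invB by simp
      from a b c show ?thesis by linarith
    qed
    have PQ: "P q qd + Q q qd = 0" for q qd using H' BG by simp
    have c: "P q qd + W q qd \<bullet> (D *v W q qd) = 0" for q qd
      using PQ[of "q(i:=0)" qd] invP[where q=q and qd=qd and t=0 and s="qd i"] invQW[of q qd "qd i"] by simp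
    show "(\<forall>q qd. B q qd + qd i * G = 0) \<and> (\<forall>q qd. Q q qd - W q qd \<bullet> (D *v W q qd) = 0) \<and>
      (\<forall>q qd. P q qd + W q qd \<bullet> (D *v W q qd) = 0)"
      using BG PQ c by (metis add_diff_cancel_left' diff_zero mult_zero_right add.right_neutral)
  next
    assume H: "(\<forall>q qd. B q qd + qd i * G = 0) \<and> (\<forall>q qd. Q q qd - W q qd \<bullet> (D *v W q qd) = 0) \<and>
      (\<forall>q qd. P q qd + W q qd \<bullet> (D *v W q qd) = 0)"
    have B0: "B q qd = 0" for q qd using H invB[of q qd 0] by (metis fun_upd_same mult_zero_left add.right_neutral)
    have G0: "G = 0" using H B0 by (metis fun_upd_same mult_1 add_0)
    show "\<forall>q qd. (\<Sum>j=1..N. T q qd j) = 0"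
    proof (intro allI)
      fix q qd
      have "Q q qd = W q qd \<bullet> (D *v W q qd)" "P q qd = - (W q qd \<bullet> (D *v W q qd))" using H by (auto simp: algebra_simps eq_neg_iff_add_eq_0)
      then show "(\<Sum>j=1..N. T q qd j) = 0" using E0 E1 B0 G0 by simp
    qed
  qed
  show ?thesis using core unfolding E2 E3 E4 T_def .
qed
end
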